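(* Let $s\in S^{\mathbb{N}}$ be a directive sequence such that (primitivity) for every $n$ there is $k\ge n$ with $M_{[n,k)}>0$ entrywise, and (strong convergence) $\sum_n|||\pi_vM_{[0,n)}|||_1$ converges for some vector $v\in\mathbb{R}_+^{d+1}\setminus\{0\}$. Then for every letter $a\in A$ and every fixed point $u$ of $s$, $$R_a(u_0)=\Big\{\sum_{n=0}^\infty\pi_v(M_{[0,n)}t_n)\ \Big|\ \cdots\xrightarrow{t_n,s_n}\cdots\xrightarrow{t_0,s_0}a \text{ is a left-infinite path in }\mathcal{A}\Big\}.$$ In particular the Rauzy fractal does not depend on the choice of the fixed point $u$, and it is compact.
   Context: $d\ge1$, $A=\{0,\dots,d\}$, $h(y)=\sum_iy_i$, $P=\{h=0\}$; for $v\in\mathbb{R}_+^{d+1}\setminus\{0\}$, $\pi_v(z)=z-h(z)v/h(v)$ is the projection onto $P$ along $v$; $|||\cdot|||_1$ is the $\ell^1$ operator norm. $S$ is a finite set of unimodular substitutions on $A$ (morphisms of $A^*$ with non-empty images of letters, $|\det\mathrm{ab}(\sigma)|=1$, where $\mathrm{ab}$ is abelianization: $\mathrm{ab}(w)$ counts letters of $w$). For $s=(s_k)$: $M_k=\mathrm{ab}(s_k)$, $M_{[k,n)}=M_k\cdots M_{n-1}$. A fixed point of $s$ is $(u_k)$ with $s_k(u_{k+1})=u_k$ for all $k$. Abelianized prefix automaton $\mathcal{A}$: states $A$, transitions $a\xrightarrow{t,\sigma}b$ ($\sigma\in S$, $t\in\mathbb{Z}^{d+1}$) iff $\sigma(a)=pbq$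 for words $p,q$ with $\mathrm{ab}(p)=t$. A left-infinite path $\cdots\xrightarrow{t_n,s_n}\cdots\xrightarrow{t_0,s_0}a$ is a sequence of states $a_0=a,a_1,a_2,\dots$ with $a_{k+1}\xrightarrow{t_k,s_k}a_k$ a transition for all $k$. For an infinite word $w$ and $a\in A$, $W_a(w)=\{\mathrm{ab}(p):pa\text{ prefix of }w\}$, and $R_a(u_0)=\overline{\pi_v(W_a(u_0))}$, the Rauzy fractal being $R(u_0)=\bigcup_aR_a(u_0)$. *)

theory Defs
  imports "HOL-Analysis.Analysis"
begin

text \<open>Alphabet: a finite type 'a (so A = UNIV, d+1 = CARD('a)).
  Vectors in R^(d+1): real^'a. Substitutions: 'a \<Rightarrow> 'a list.
  Infinite words: nat \<Rightarrow> 'a.\<close>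

definition ab :: "'a::finite list \<Rightarrow> real^'a" where
  "ab w = (\<chi> b. real (count_list w b))"

definition ab_mat :: "('a::finite \<Rightarrow> 'a list) \<Rightarrow> real^'a^'a" where
  "ab_mat \<sigma> = (\<chi> i j. real (count_list (\<sigma> j) i))"

definition unimodular_subst :: "('a::finite \<Rightarrow> 'a list) \<Rightarrow> bool" where
  "unimodular_subst \<sigma> \<longleftrightarrow> (\<forall>a. \<sigma> a \<noteq> []) \<and> \<bar>det (ab_mat \<sigma>)\<bar> = 1"

text \<open>mprod s k m = M_k ** ... ** M_(k+m-1), i.e. M_[k,k+m).\<close>
fun mprod :: "(nat \<Rightarrow> ('a::finite \<Rightarrow> 'a list)) \<Rightarrow> nat \<Rightarrow> nat \<Rightarrow> real^'a^'a" where
  "mprod s k 0 = mat 1"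
| "mprod s k (Suc m) = mprod s k m ** ab_mat (s (k + m))"

definition Mint :: "(nat \<Rightarrow> ('a::finite \<Rightarrow> 'a list)) \<Rightarrow> nat \<Rightarrow> nat \<Rightarrow> real^'a^'a" where
  "Mint s k n = mprod s k (n - k)"

definition hsum :: "real^'a::finite \<Rightarrow> real" where
  "hsum y = (\<Sum>i\<in>UNIV. y $ i)"

definition proj :: "real^'a::finite \<Rightarrow> real^'a \<Rightarrow> real^'a" where
  "proj v z = z - (hsum z / hsum v) *\<^sub>R v"

definition norm1 :: "real^'a::finite \<Rightarrow> real" where
  "norm1 x = (\<Sum>i\<in>UNIV. \<bar>x $ i\<bar>)"

definition l1_opnorm :: "(real^'a::finite \<Rightarrow> real^'a) \<Rightarrow> real" where
  "l1_opnorm f = (SUP x\<in>{x. norm1 x = 1}. norm1 (f x))"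

text \<open>Image of an infinite word under a substitution with non-empty images:
  the i-th letter of sigma(w) lies within sigma(w_0 ... w_i).\<close>
definition subst_inf :: "('a \<Rightarrow> 'a list) \<Rightarrow> (nat \<Rightarrow> 'a) \<Rightarrow> (nat \<Rightarrow> 'a)" where
  "subst_inf \<sigma> w = (\<lambda>i. concat (map \<sigma> (map w [0..<Suc i])) ! i)"

definition fixed_point :: "(nat \<Rightarrow> ('a \<Rightarrow> 'a list)) \<Rightarrow> (nat \<Rightarrow> (nat \<Rightarrow> 'a)) \<Rightarrow> bool" where
  "fixed_point s u \<longleftrightarrow> (\<forall>k. subst_inf (s k) (u (Suc k)) = u k)"

definition prefix_inf :: "(nat \<Rightarrow> 'a) \<Rightarrow> nat \<Rightarrow> 'a list" where
  "prefix_inf w n = map w [0..<n]"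

definition Wset :: "(nat \<Rightarrow> 'a::finite) \<Rightarrow> 'a \<Rightarrow> (real^'a) set" where
  "Wset w a = {ab (prefix_inf w n) | n. w n = a}"

definition Rset :: "real^'a::finite \<Rightarrow> (nat \<Rightarrow> 'a) \<Rightarrow> 'a \<Rightarrow> (real^'a) set" where
  "Rset v w a = closure (proj v ` Wset w a)"

definition rauzy :: "real^'a::finite \<Rightarrow> (nat \<Rightarrow> 'a) \<Rightarrow> (real^'a) set" where
  "rauzy v w = (\<Union>a. Rset v w a)"

definition transition :: "'a::finite \<Rightarrow> real^'a \<Rightarrow> ('a \<Rightarrow> 'a list) \<Rightarrow> 'a \<Rightarrow> bool" where
  "transition a t \<sigma> b \<longleftrightarrow> (\<exists>p q. \<sigma> a = p @ b # q \<and> ab p = t)"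

definition left_path :: "(nat \<Rightarrow> ('a::finite \<Rightarrow> 'a list)) \<Rightarrow> 'a \<Rightarrow> (nat \<Rightarrow> 'a) \<Rightarrow> (nat \<Rightarrow> real^'a) \<Rightarrow> bool" where
  "left_path s a st t \<longleftrightarrow> st 0 = a \<and> (\<forall>k. transition (st (Suc k)) (t k) (s k) (st k))"

definition path_set :: "(nat \<Rightarrow> ('a::finite \<Rightarrow> 'a list)) \<Rightarrow> real^'a \<Rightarrow> 'a \<Rightarrow> (real^'a) set" where
  "path_set s v a = {(\<Sum>n. proj v (Mint s 0 n *v t n)) | st t. left_path s a st t}"

end

theory Submission imports Defs "HOL-Library.Diagonal_Subsequence" begin


lemma ab_Nil[simp]: "ab [] = 0" by (simp add: ab_def vec_eq_iff)
lemma ab_append: "ab (xs @ ys) = ab xs + ab ys" by (simp add: ab_def vec_eq_iff)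

lemma ab_single_img: "ab (\<sigma> x) = ab_mat \<sigma> *v ab [x]"
  by (simp add: ab_def ab_mat_def vec_eq_iff matrix_vector_mult_def if_distrib cong: if_cong)

lemma ab_concat_map: "ab (concat (map \<sigma> xs)) = ab_mat \<sigma> *v ab xs"
proof (induction xs)
  case Nil then show ?case by simp
next
  case (Cons x xs)
  have "ab (x # xs) = ab [x] + ab xs" using ab_append[of "[x]" xs] by simp
  then show ?case using Cons by (simp add: ab_append ab_single_img matrix_vector_right_distrib)
qed

lemma norm1_ab: "norm1 (ab p) = real (length p)"
proof (induction p)
  case Nil then show ?case by (simp add: norm1_def)
next
  case (Cons x p)
  have "norm1 (ab (x # p)) = (\<Sum>b\<in>UNIV. real (count_list p b) + (if x = b then 1 else 0))"
    by (simp add: norm1_def ab_def) (rule sum.cong, auto)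
  also have "\<dots> = norm1 (ab p) + 1" by (simp add: sum.distrib norm1_def ab_def)
  finally show ?case using Cons by simp
qed

definition cpre :: "('a \<Rightarrow> 'a list) \<Rightarrow> (nat \<Rightarrow> 'a) \<Rightarrow> nat \<Rightarrow> 'a list" where
  "cpre \<sigma> w m = concat (map \<sigma> (map w [0..<m]))"

lemma cpre_Suc: "cpre \<sigma> w (Suc m) = cpre \<sigma> w m @ \<sigma> (w m)"
  by (simp add: cpre_def)

lemma cpre_prefix: "m \<le> m' \<Longrightarrow> \<exists>ys. cpre \<sigma> w m' = cpre \<sigma> w m @ ys"
proof (induction m' rule: dec_induct)
  case base then show ?case by simp
next
  case (step n) then show ?case by (auto simp: cpre_Suc)
qed

lemma length_concat_ge: "\<forall>a. \<sigma> a \<noteq> [] \<Longrightarrow> length xs \<le> length (concat (map \<sigma> xs))"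
proof (induction xs)
  case (Cons x xs)
  then have "length (\<sigma> x) \<ge> 1" by (simp add: Suc_le_eq)
  then show ?case using Cons by simp
qed simp

lemma length_cpre: "\<forall>a. \<sigma> a \<noteq> [] \<Longrightarrow> m \<le> length (cpre \<sigma> w m)"
  using length_concat_ge[of \<sigma> "map w [0..<m]"] by (simp add: cpre_def)

lemma cpre_nth:
  assumes ne: "\<forall>a. \<sigma> a \<noteq> []" and l: "l < length (cpre \<sigma> w m)"
  shows "cpre \<sigma> w m ! l = subst_inf \<sigma> w l"
proof -
  obtain ys where ys: "cpre \<sigma> w (max m (Suc l)) = cpre \<sigma> w m @ ys"
    using cpre_prefix[of m "max m (Suc l)"] by auto
  obtain zs where zs: "cpre \<sigma> w (max m (Suc l)) = cpre \<sigma> w (Suc l) @ zs"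
    using cpre_prefix[of "Suc l" "max m (Suc l)"] by auto
  have l2: "l < length (cpre \<sigma> w (Suc l))" using length_cpre[OF ne, of "Suc l" w] by simp
  have "cpre \<sigma> w m ! l = cpre \<sigma> w (max m (Suc l)) ! l" using ys l by (simp add: nth_append)
  also have "\<dots> = cpre \<sigma> w (Suc l) ! l" using zs l2 by (simp add: nth_append)
  finally show ?thesis by (simp add: subst_inf_def cpre_def)
qed

lemma prefix_subst:
  assumes ne: "\<forall>a. \<sigma> a \<noteq> []" and i: "i \<le> length (cpre \<sigma> w m)"
  shows "prefix_inf (subst_inf \<sigma> w) i = take i (cpre \<sigma> w m)"
  by (rule nth_equalityI) (use i cpre_nth[OF ne] in \<open>auto simp: prefix_inf_def\<close>)

lemma desubst:
  assumes ne: "\<forall>a. \<sigma> a \<noteq> []"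
  shows "\<exists>j p q. j + length p \<le> i \<and> \<sigma> (w j) = p @ subst_inf \<sigma> w i # q
     \<and> prefix_inf (subst_inf \<sigma> w) i = cpre \<sigma> w j @ p
     \<and> (j = i \<longrightarrow> 0 < i \<longrightarrow> \<sigma> (w 0) = [subst_inf \<sigma> w 0])"
proof -
  define j where "j = (LEAST j. i < length (cpre \<sigma> w (Suc j)))"
  have ex: "i < length (cpre \<sigma> w (Suc i))" using length_cpre[OF ne, of "Suc i" w] by simp
  have j1: "i < length (cpre \<sigma> w (Suc j))" unfolding j_def by (rule LeastI[of _ i], rule ex)
  have j0: "length (cpre \<sigma> w j) \<le> i"
  proof (cases j)
    case 0 then show ?thesis by (simp add: cpre_def)
  next
    case (Suc j')
    have "\<not> i < length (cpre \<sigma> w (Suc j'))"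
      using not_less_Least[of j' "\<lambda>j. i < length (cpre \<sigma> w (Suc j))"] Suc j_def by simp
    then show ?thesis using Suc by simp
  qed
  define d where "d = i - length (cpre \<sigma> w j)"
  have dl: "d < length (\<sigma> (w j))" using j0 j1 by (simp add: d_def cpre_Suc)
  define p where "p = take d (\<sigma> (w j))"
  define q where "q = drop (Suc d) (\<sigma> (w j))"
  have dec: "\<sigma> (w j) = p @ \<sigma> (w j) ! d # q" unfolding p_def q_def using id_take_nth_drop[OF dl] .
  have "\<sigma> (w j) ! d = cpre \<sigma> w (Suc j) ! i" using j0 by (simp add: cpre_Suc nth_append d_def)
  also have "\<dots> = subst_inf \<sigma> w i" using cpre_nth[OF ne j1] .
  finally have dec2: "\<sigma> (w j) = p @ subst_inf \<sigma> w i # q" using dec by simp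
  have pre: "prefix_inf (subst_inf \<sigma> w) i = cpre \<sigma> w j @ p"
    using prefix_subst[OF ne, of i w "Suc j"] j1 j0 by (simp add: cpre_Suc p_def d_def)
  have jl: "j \<le> length (cpre \<sigma> w j)" using length_cpre[OF ne] .
  have lp: "length p = d" using dl by (simp add: p_def)
  have stab: "\<sigma> (w 0) = [subst_inf \<sigma> w 0]" if ji: "j = i" and ip: "0 < i"
  proof -
    obtain j' where j': "j = Suc j'" using not0_implies_Suc[of j] ji ip by auto
    have "cpre \<sigma> w j = \<sigma> (w 0) @ concat (map \<sigma> (map w [1..<j]))"
      unfolding cpre_def j' by (subst upt_conv_Cons) auto
    moreover have "j' \<le> length (concat (map \<sigma> (map w [1..<j])))"
      using length_concat_ge[OF ne, of "map w [1..<j]"] j' by (simp del: upt_Suc)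
    ultimately have "length (\<sigma> (w 0)) \<le> 1" using j0 ji j' by simp
    moreover have "\<sigma> (w 0) \<noteq> []" using ne by simp
    ultimately obtain x where x: "\<sigma> (w 0) = [x]"
      by (metis One_nat_def Suc_length_conv le_SucE le_zero_eq length_0_conv)
    then show ?thesis by (simp add: subst_inf_def)
  qed
  show ?thesis using dec2 pre jl lp j0 stab by (intro exI[of _ j] exI[of _ p] exI[of _ q]) (auto simp: d_def)
qed

lemma lift:
  assumes ne: "\<forall>a. \<sigma> a \<noteq> []" and dec: "\<sigma> (w i) = p @ c # q"
  shows "\<exists>i'. subst_inf \<sigma> w i' = c \<and> prefix_inf (subst_inf \<sigma> w) i' = cpre \<sigma> w i @ p"
proof -
  define i' where "i' = length (cpre \<sigma> w i) + length p"
  have cs: "cpre \<sigma> w (Suc i) = cpre \<sigma> w i @ p @ c # q" using dec by (simp add: cpre_Suc)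
  have il: "i' < length (cpre \<sigma> w (Suc i))" using cs by (simp add: i'_def)
  have "subst_inf \<sigma> w i' = c" using cpre_nth[OF ne il, symmetric] cs by (simp add: i'_def nth_append)
  moreover have "prefix_inf (subst_inf \<sigma> w) i' = cpre \<sigma> w i @ p"
    using prefix_subst[OF ne, of i' w "Suc i"] il cs by (simp add: i'_def)
  ultimately show ?thesis by blast
qed

lemma ab_cpre: "ab (cpre \<sigma> w j) = ab_mat \<sigma> *v ab (prefix_inf w j)"
  unfolding cpre_def prefix_inf_def using ab_concat_map[of \<sigma> "map w [0..<j]"] by simp

lemma mprod_add: "mprod s k (m + m') = mprod s k m ** mprod s (k + m) m'"
  by (induction m') (simp_all add: matrix_mul_assoc add.assoc)

lemma Mint0[simp]: "Mint s 0 n = mprod s 0 n" by (simp add: Mint_def)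



lemma column:
  assumes "\<forall>k\<ge>n. s k (b (Suc k)) = [b k]"
  shows "mprod s n m $ i $ b (n + m) = (if i = b n then 1 else 0)"
proof (induction m)
  case 0 then show ?case by (simp add: mat_def)
next
  case (Suc m)
  have bm: "ab_mat (s (n + m)) $ l $ b (n + Suc m) = (if l = b (n + m) then 1 else 0)" for l
    using assms by (simp add: ab_mat_def)
  have "mprod s n (Suc m) $ i $ b (n + Suc m)
      = (\<Sum>l\<in>UNIV. mprod s n m $ i $ l * (if l = b (n + m) then 1 else 0))"
    by (simp add: matrix_matrix_mult_def bm del: add_Suc_right)
  also have "\<dots> = mprod s n m $ i $ b (n + m)" by (simp add: if_distrib cong: if_cong)
  finally show ?case using Suc by simp
qed

locale fp =
  fixes s :: "nat \<Rightarrow> ('a::finite \<Rightarrow> 'a list)" and u :: "nat \<Rightarrow> nat \<Rightarrow> 'a"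
  assumes ne: "\<And>k. \<forall>a. s k a \<noteq> []"
    and fxp: "fixed_point s u"
    and prim: "\<forall>n. \<exists>k\<ge>n. \<forall>i j. Mint s n k $ i $ j > 0"
    and card2: "CARD('a) \<ge> 2"
begin

lemma fixk: "subst_inf (s k) (u (Suc k)) = u k"
  using fxp by (simp add: fixed_point_def)

lemma decomp:
  "\<exists>st t N1. st 0 = u N i \<and> (\<forall>k. transition (st (Suc k)) (t k) (s (N + k)) (st k))
     \<and> (\<forall>k\<ge>N1. t k = 0) \<and> ab (prefix_inf (u N) i) = (\<Sum>k<N1. mprod s N k *v t k)"
proof -
  have Dex: "\<forall>k i. \<exists>jp. fst jp + length (snd jp) \<le> i
     \<and> (\<exists>q. s (N + k) (u (Suc (N + k)) (fst jp)) = snd jp @ u (N + k) i # q)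
     \<and> prefix_inf (u (N + k)) i = cpre (s (N + k)) (u (Suc (N + k))) (fst jp) @ snd jp
     \<and> (fst jp = i \<longrightarrow> 0 < i \<longrightarrow> s (N + k) (u (Suc (N + k)) 0) = [u (N + k) 0])" (is "\<forall>k i. \<exists>jp. ?P k i jp")
  proof (intro allI)
    fix k i
    show "\<exists>jp. ?P k i jp"
      using desubst[OF ne[of "N + k"], of i "u (Suc (N + k))"] unfolding fixk by force
  qed
  define D where "D k i = (SOME jp. ?P k i jp)" for k i
  have D: "?P k i (D k i)" for k i unfolding D_def by (rule someI_ex[of "?P k i"]) (use Dex in blast)
  define idx where "idx = rec_nat i (\<lambda>k x. fst (D k x))"
  have idx0: "idx 0 = i" and idxS: "\<And>k. idx (Suc k) = fst (D k (idx k))" by (simp_all add: idx_def)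
  define st where "st k = u (N + k) (idx k)" for k
  define t where "t k = ab (snd (D k (idx k)))" for k
  have tr: "transition (st (Suc k)) (t k) (s (N + k)) (st k)" for k
    using D[of k "idx k"] by (auto simp: transition_def st_def t_def idxS)
  have inv: "ab (prefix_inf (u N) i) = (\<Sum>k<m. mprod s N k *v t k) + mprod s N m *v ab (prefix_inf (u (N + m)) (idx m))" for m
  proof (induction m)
    case 0 then show ?case by (simp add: idx0)
  next
    case (Suc m)
    have "ab (prefix_inf (u (N + m)) (idx m)) = ab_mat (s (N + m)) *v ab (prefix_inf (u (N + Suc m)) (idx (Suc m))) + t m"
      using D[of m "idx m"] by (simp add: ab_append ab_cpre idxS t_def)
    then show ?case using Suc
      by (simp add: matrix_vector_right_distrib matrix_vector_mul_assoc algebra_simps)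
  qed
  have dec: "idx (Suc k) \<le> idx k" for k using D[of k "idx k"] by (simp add: idxS)
  have antimono: "idx k \<le> idx m" if "m \<le> k" for m k
    using that by (induction k rule: dec_induct) (auto intro: order_trans[OF dec])
  define c where "c = (LEAST x. x \<in> range idx)"
  obtain m0 where m0: "idx m0 = c" using LeastI[of "\<lambda>x. x \<in> range idx" "idx 0"] c_def by auto
  have const: "idx k = c" if "m0 \<le> k" for k
    using antimono[OF that] Least_le[of "\<lambda>x. x \<in> range idx" "idx k"] m0 c_def by auto
  have c0: "c = 0"
  proof (rule ccontr)
    assume "c \<noteq> 0"
    define b where "b k = u k 0" for k
    have "\<forall>k\<ge>N + m0. s k (b (Suc k)) = [b k]"
    proof (intro allI impI)
      fix k assume k: "N + m0 \<le> k"
      have "fst (D (k - N) (idx (k - N))) = idx (k - N)" using const[of "Suc (k - N)"] const[of "k - N"] k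
        by (simp add: idxS)
      moreover have "0 < idx (k - N)" using const[of "k - N"] k \<open>c \<noteq> 0\<close> by simp
      ultimately show "s k (b (Suc k)) = [b k]" using D[of "k - N" "idx (k - N)"] k by (simp add: b_def)
    qed
    note col = column[of "N + m0" s b, OF this]
    obtain K where K: "K \<ge> N + m0" "\<forall>i j. Mint s (N + m0) K $ i $ j > 0" using prim by blast
    obtain x y :: 'a where "x \<noteq> y" using card2 card_le_Suc0_iff_eq[of "UNIV::'a set"] by force
    then obtain z where z: "z \<noteq> b (N + m0)" by metis
    have "Mint s (N + m0) K $ z $ b K = 0"
      using col[of "K - (N + m0)" z] K(1) z by (simp add: Mint_def)
    then show False using K(2) by (metis less_irrefl)
  qed
  have "t k = 0" if "k \<ge> m0" for k
    using D[of k "idx k"] const[OF that] c0 by (simp add: t_def)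
  moreover have "prefix_inf (u (N + m0)) (idx m0) = []" using m0 c0 by (simp add: prefix_inf_def)
  ultimately show ?thesis using inv[of m0] tr
    by (intro exI[of _ st] exI[of _ t] exI[of _ m0]) (simp add: st_def idx0)
qed

lemma occ_step:
  assumes "u (Suc k) j = e" "l \<in> set (s k e)"
  shows "\<exists>i. u k i = l"
proof -
  obtain p q where "s k e = p @ l # q" using assms(2) by (metis split_list)
  then show ?thesis using lift[OF ne[of k], of "u (Suc k)" j p l q] assms(1) unfolding fixk by auto
qed

lemma occ_mprod:
  "\<forall>c e. mprod s N m $ c $ e > 0 \<longrightarrow> (\<exists>i. u (N + m) i = e) \<longrightarrow> (\<exists>i. u N i = c)"
proof (induction m)
  case 0 then show ?case by (auto simp: mat_def split: if_splits)
next
  case (Suc m)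
  show ?case
  proof (intro allI impI)
    fix c e assume pos: "mprod s N (Suc m) $ c $ e > 0" and oc: "\<exists>i. u (N + Suc m) i = e"
    have "0 < (\<Sum>l\<in>UNIV. mprod s N m $ c $ l * ab_mat (s (N + m)) $ l $ e)"
      using pos by (simp add: matrix_matrix_mult_def)
    then obtain l where l: "0 < mprod s N m $ c $ l * ab_mat (s (N + m)) $ l $ e"
      by (metis (no_types, lifting) linorder_not_le sum_nonpos)
    have bnn: "ab_mat (s (N + m)) $ l $ e \<ge> 0" by (simp add: ab_mat_def)
    then have A: "mprod s N m $ c $ l > 0" and B: "ab_mat (s (N + m)) $ l $ e > 0"
      using l by (auto simp: zero_less_mult_iff)
    have "l \<in> set (s (N + m) e)" using B count_list_0_iff[of "s (N + m) e" l] by (auto simp: ab_mat_def)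
    then have "\<exists>i. u (N + m) i = l" using oc occ_step[of "N + m"] by auto
    then show "\<exists>i. u N i = c" using Suc A by blast
  qed
qed

lemma occ: "\<exists>i. u N i = c"
proof -
  obtain K where K: "K \<ge> N" "\<forall>i j. Mint s N K $ i $ j > 0" using prim by blast
  have "mprod s N (K - N) $ c $ u K 0 > 0" using K by (simp add: Mint_def)
  then show ?thesis using occ_mprod[of N "K - N"] K(1) by auto
qed

lemma lift_path:
  assumes lp: "left_path s a st t"
  shows "u m i = st m \<Longrightarrow> \<exists>i0. u 0 i0 = a \<and> ab (prefix_inf (u 0) i0)
           = (\<Sum>k<m. mprod s 0 k *v t k) + mprod s 0 m *v ab (prefix_inf (u m) i)"
proof (induction m arbitrary: i)
  case 0 then show ?case using lp by (auto simp: left_path_def)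
next
  case (Suc m)
  obtain p q where pq: "s m (st (Suc m)) = p @ st m # q" "ab p = t m"
    using lp unfolding left_path_def transition_def by blast
  obtain i' where i': "u m i' = st m" "prefix_inf (u m) i' = cpre (s m) (u (Suc m)) i @ p"
    using lift[OF ne[of m], of "u (Suc m)" i p "st m" q] pq Suc.prems unfolding fixk by auto
  obtain i0 where "u 0 i0 = a" and e: "ab (prefix_inf (u 0) i0)
           = (\<Sum>k<m. mprod s 0 k *v t k) + mprod s 0 m *v ab (prefix_inf (u m) i')"
    using Suc.IH[OF i'(1)] by blast
  moreover have "ab (prefix_inf (u m) i') = ab_mat (s m) *v ab (prefix_inf (u (Suc m)) i) + t m"
    using i'(2) pq(2) by (simp add: ab_append ab_cpre)
  ultimately show ?case
    by (intro exI[of _ i0]) (simp add: matrix_vector_right_distrib matrix_vector_mul_assoc algebra_simps)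
qed

end


lemma hsum_add: "hsum (x + y) = hsum x + hsum y" by (simp add: hsum_def sum.distrib)
lemma hsum_scale: "hsum (c *\<^sub>R x) = c * hsum x" by (simp add: hsum_def sum_distrib_left)

lemma linear_proj: "linear (proj v)"
  by (rule linearI) (simp_all add: proj_def hsum_add hsum_scale algebra_simps add_divide_distrib)

lemma norm_le_norm1: "norm x \<le> norm1 x" using norm_le_l1_cart by (simp add: norm1_def)

lemma norm1_le_norm: "norm1 (x::real^'a::finite) \<le> real CARD('a) * norm x"
proof -
  have "norm1 x \<le> (\<Sum>i\<in>(UNIV::'a set). norm x)" unfolding norm1_def
    by (rule sum_mono) (rule component_le_norm_cart)
  then show ?thesis by simp
qed

lemma norm1_scale: "norm1 (c *\<^sub>R x) = \<bar>c\<bar> * norm1 x"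
  by (simp add: norm1_def sum_distrib_left abs_mult)

lemma norm1_linear_bound:
  fixes f :: "real^'a::finite \<Rightarrow> real^'a"
  assumes lin: "linear f"
  shows "norm1 (f x) \<le> l1_opnorm f * norm1 x"
proof -
  have bl: "bounded_linear f" using lin linear_conv_bounded_linear by blast
  have bdd: "bdd_above ((\<lambda>x. norm1 (f x)) ` {x. norm1 x = 1})"
  proof (rule bdd_aboveI2)
    fix x :: "real^'a" assume "x \<in> {x. norm1 x = 1}"
    then have x: "norm1 (x::real^'a) = 1" by auto
    have "norm1 (f x) \<le> real CARD('a) * norm (f x)" by (rule norm1_le_norm)
    also have "\<dots> \<le> real CARD('a) * (onorm f * norm x)"
      by (rule mult_left_mono[OF onorm[OF bl]]) simp
    also have "\<dots> \<le> real CARD('a) * (onorm f * 1)"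
      using norm_le_norm1[of x] x onorm_pos_le[OF bl] by (intro mult_left_mono) auto
    finally show "norm1 (f x) \<le> real CARD('a) * onorm f" by simp
  qed
  show ?thesis
  proof (cases "x = 0")
    case True
    then show ?thesis using linear_0[OF lin] by (simp add: norm1_def)
  next
    case False
    define c where "c = norm1 x"
    have cpos: "c > 0" using False norm_le_norm1[of x] unfolding c_def
      by (metis zero_less_norm_iff order_less_le_trans)
    define x' where "x' = (1 / c) *\<^sub>R x"
    have x'1: "norm1 x' = 1" using cpos by (simp add: x'_def norm1_scale c_def)
    have fx: "f x = c *\<^sub>R f x'" using cpos linear_scale[OF lin] by (simp add: x'_def)
    have "norm1 (f x') \<le> l1_opnorm f" unfolding l1_opnorm_def
      by (rule cSUP_upper[OF _ bdd]) (simp add: x'1)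
    then show ?thesis using cpos by (simp add: fx norm1_scale c_def mult.commute)
  qed
qed

lemma l1_opnorm_nonneg:
  fixes f :: "real^'a::finite \<Rightarrow> real^'a"
  assumes lin: "linear f"
  shows "0 \<le> l1_opnorm f"
proof -
  obtain i :: 'a where True by simp
  have "norm1 (axis i (1::real)) = 1" by (simp add: norm1_def axis_def)
  moreover have "0 \<le> norm1 (f (axis i 1))" by (simp add: norm1_def sum_nonneg)
  ultimately show ?thesis using norm1_linear_bound[OF lin, of "axis i 1"] by simp
qed



locale ser =
  fixes s :: "nat \<Rightarrow> ('a::finite \<Rightarrow> 'a list)" and S and v :: "real^'a"
  assumes finS: "finite S" and sS: "\<And>k. s k \<in> S"
    and summ: "summable (\<lambda>n. l1_opnorm (\<lambda>z. proj v (Mint s 0 n *v z)))"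
begin

definition L where "L n = l1_opnorm (\<lambda>z. proj v (mprod s 0 n *v z))"
definition K where "K = Max ((\<lambda>(\<sigma>, a). real (length (\<sigma> a))) ` (S \<times> UNIV))"
definition tail where "tail N = (\<Sum>i. K * L (i + N))"

lemma linM: "linear (\<lambda>z. proj v (mprod s m n *v z))"
  using linear_compose[OF matrix_vector_mul_linear linear_proj] by (simp add: o_def)

lemma L_nonneg: "0 \<le> L n" unfolding L_def by (rule l1_opnorm_nonneg[OF linM])

lemma summL: "summable L" using summ by (simp add: L_def[abs_def])

lemma lenK: "real (length (s k a)) \<le> K"
  unfolding K_def by (rule Max_ge) (use finS sS in auto)

lemma K_nonneg: "0 \<le> K" using lenK[of 0 undefined] by linarith

lemma transK: "transition b t (s k) c \<Longrightarrow> norm1 t \<le> K"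
  unfolding transition_def using lenK[of k b] by (auto simp: norm1_ab)

lemma pathK: "left_path s a st t \<Longrightarrow> norm1 (t n) \<le> K"
  unfolding left_path_def using transK by blast

lemma term_bound:
  assumes "norm1 t \<le> K"
  shows "norm (proj v (mprod s 0 n *v t)) \<le> K * L n"
proof -
  have "norm (proj v (mprod s 0 n *v t)) \<le> norm1 (proj v (mprod s 0 n *v t))" by (rule norm_le_norm1)
  also have "\<dots> \<le> L n * norm1 t" unfolding L_def by (rule norm1_linear_bound[OF linM])
  also have "\<dots> \<le> L n * K" using assms L_nonneg by (rule mult_left_mono)
  finally show ?thesis by (simp add: mult.commute)
qed

lemma summKL: "summable (\<lambda>n. K * L n)" using summable_mult[OF summL] .

lemma summ_path:
  assumes "\<And>n. norm1 (t n) \<le> K"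
  shows "summable (\<lambda>n. proj v (mprod s 0 n *v t n))"
  by (rule summable_comparison_test'[OF summKL]) (use term_bound assms in auto)

lemma tail_nonneg: "0 \<le> tail N"
  unfolding tail_def
  by (rule suminf_nonneg[OF summable_ignore_initial_segment[OF summKL]])
     (use K_nonneg L_nonneg in simp)

lemma tail_bound:
  assumes "\<And>n. norm1 (t n) \<le> K"
  shows "norm ((\<Sum>n. proj v (mprod s 0 n *v t n)) - (\<Sum>n<N. proj v (mprod s 0 n *v t n))) \<le> tail N"
proof -
  have sp: "summable (\<lambda>n. proj v (mprod s 0 n *v t n))" by (rule summ_path) (rule assms)
  have "(\<Sum>n. proj v (mprod s 0 n *v t n)) - (\<Sum>n<N. proj v (mprod s 0 n *v t n))
      = (\<Sum>n. proj v (mprod s 0 (n + N) *v t (n + N)))"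
    using suminf_minus_initial_segment[OF sp, of N] by simp
  also have "norm \<dots> \<le> tail N" unfolding tail_def
    by (rule norm_suminf_le) (use term_bound assms summable_ignore_initial_segment[OF summKL] in auto)
  finally show ?thesis .
qed

lemma tail_small: "e > 0 \<Longrightarrow> \<exists>N. tail N < e"
  using suminf_exist_split[OF _ summKL, of e] tail_nonneg unfolding tail_def by force

lemma tail_finite:
  assumes "\<And>n. norm1 (t n) \<le> K"
  shows "norm (\<Sum>k<N1. proj v (mprod s 0 (N + k) *v t k)) \<le> tail N"
proof -
  have "norm (\<Sum>k<N1. proj v (mprod s 0 (N + k) *v t k)) \<le> (\<Sum>k<N1. K * L (k + N))"
    by (rule order_trans[OF norm_sum sum_mono]) (use term_bound assms in \<open>auto simp: add.commute\<close>)
  also have "\<dots> \<le> tail N" unfolding tail_def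
    by (rule sum_le_suminf[OF summable_ignore_initial_segment[OF summKL]])
       (use K_nonneg L_nonneg in auto)
  finally show ?thesis .
qed

lemma path_norm: "y \<in> path_set s v a \<Longrightarrow> norm y \<le> tail 0"
  unfolding path_set_def using tail_bound[of _ 0] pathK by fastforce

end


context ser begin

definition TT where "TT = ab ` {p. set p \<subseteq> UNIV \<and> length p \<le> nat \<lceil>K\<rceil>}"

lemma TT_finite: "finite TT"
  unfolding TT_def by (rule finite_imageI) (rule finite_lists_length_le, simp)

lemma trans_TT: "transition b t (s k) c \<Longrightarrow> t \<in> TT"
proof -
  assume "transition b t (s k) c"
  then obtain p q where pq: "s k b = p @ c # q" "ab p = t" by (auto simp: transition_def)
  have "real (length p) \<le> K" using lenK[of k b] pq(1) by simp
  then have "length p \<le> nat \<lceil>K\<rceil>" by linarith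
  then show "t \<in> TT" using pq(2) by (auto simp: TT_def)
qed

lemma path_closed: "closed (path_set s v a)"
  unfolding closed_sequential_limits
proof (intro allI impI, elim conjE)
  fix x l assume xs: "\<forall>n. x n \<in> path_set s v a" and lim: "x \<longlonglongrightarrow> l"
  have PPex: "\<forall>m. \<exists>p. left_path s a (fst p) (snd p) \<and> x m = (\<Sum>n. proj v (mprod s 0 n *v snd p n))"
    using xs unfolding path_set_def by force
  define PP where "PP m = (SOME p. left_path s a (fst p) (snd p) \<and> x m = (\<Sum>n. proj v (mprod s 0 n *v snd p n)))" for m
  have PP: "left_path s a (fst (PP m)) (snd (PP m)) \<and> x m = (\<Sum>n. proj v (mprod s 0 n *v snd (PP m) n))" for m
    unfolding PP_def by (rule someI_ex) (use PPex in blast)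
  define Q where "Q m k = (fst (PP m) k, snd (PP m) k)" for m k
  have QF: "Q m k \<in> UNIV \<times> TT" for m k
  proof -
    have "transition (fst (PP m) (Suc k)) (snd (PP m) k) (s k) (fst (PP m) k)"
      using PP[of m] by (simp add: left_path_def)
    then show ?thesis using trans_TT by (simp add: Q_def)
  qed
  interpret D: subseqs "\<lambda>k r. \<forall>m. Q (r m) k = Q (r 0) k"
  proof
    fix k and s' :: "nat \<Rightarrow> nat" assume "strict_mono s'"
    define g where "g m = Q (s' m) k" for m
    have "range g \<subseteq> UNIV \<times> TT" using QF unfolding g_def by blast
    then have "finite (range g)" using finite_subset finite_cartesian_product[OF finite[of UNIV] TT_finite] by blast
    then obtain y where "infinite (g -` {y})" using inf_img_fin_domE[of g UNIV] infinite_UNIV_nat by blast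
    then obtain r' :: "nat \<Rightarrow> nat" where r': "strict_mono r'" "\<forall>n. r' n \<in> g -` {y}"
      using infinite_enumerate by blast
    have "\<forall>m. Q ((s' \<circ> r') m) k = Q ((s' \<circ> r') 0) k" using r'(2) by (simp add: g_def)
    then show "\<exists>r'::nat\<Rightarrow>nat. strict_mono r' \<and> (\<forall>m. Q ((s' \<circ> r') m) k = Q ((s' \<circ> r') 0) k)"
      using r'(1) by blast
  qed
  define r where "r = D.diagseq"
  have rmono: "strict_mono r" unfolding r_def by (rule D.subseq_diagseq)
  have hold: "\<forall>m. Q ((r \<circ> (+) (Suc k)) m) k = Q ((r \<circ> (+) (Suc k)) 0) k" for k
    unfolding r_def by (rule D.diagseq_holds) (metis comp_apply)
  define q where "q k = Q (r (Suc k)) k" for k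
  have qeq: "Q (r m) k = q k" if "Suc k \<le> m" for m k
    using hold[of k, rule_format, of "m - Suc k"] that by (simp add: q_def)
  define st' where "st' k = fst (q k)" for k
  define t' where "t' k = snd (q k)" for k
  have eqst: "fst (PP (r m)) k = st' k" and eqt: "snd (PP (r m)) k = t' k" if "Suc k \<le> m" for m k
    using qeq[OF that] unfolding Q_def st'_def t'_def by (metis fst_conv, metis snd_conv)
  have lp: "left_path s a st' t'"
    unfolding left_path_def
  proof (intro conjI allI)
    show "st' 0 = a" using eqst[of 0 1] PP[of "r 1"] by (simp add: left_path_def)
    fix k
    have "transition (fst (PP (r (Suc (Suc k)))) (Suc k)) (snd (PP (r (Suc (Suc k)))) k) (s k) (fst (PP (r (Suc (Suc k)))) k)"
      using PP[of "r (Suc (Suc k))"] by (simp add: left_path_def)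
    then show "transition (st' (Suc k)) (t' k) (s k) (st' k)"
      using eqst[of "Suc k" "Suc (Suc k)"] eqst[of k "Suc (Suc k)"] eqt[of k "Suc (Suc k)"] by simp
  qed
  define y where "y = (\<Sum>n. proj v (mprod s 0 n *v t' n))"
  have ly: "dist y l < e" if epos: "e > 0" for e
  proof -
    obtain N where N: "tail N < e / 3" using tail_small[of "e/3"] epos by auto
    have "(\<lambda>m. x (r m)) \<longlonglongrightarrow> l" using LIMSEQ_subseq_LIMSEQ[OF lim rmono] by (simp add: o_def)
    then obtain M0 where M0: "\<forall>m\<ge>M0. dist (x (r m)) l < e / 3"
      using metric_LIMSEQ_D[of _ l "e/3"] epos by auto
    define m where "m = max N M0"
    have same: "(\<Sum>n<N. proj v (mprod s 0 n *v snd (PP (r m)) n)) = (\<Sum>n<N. proj v (mprod s 0 n *v t' n))"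
      by (rule sum.cong) (auto simp: eqt m_def)
    have b1: "norm (y - (\<Sum>n<N. proj v (mprod s 0 n *v t' n))) \<le> tail N"
      unfolding y_def by (rule tail_bound) (rule pathK[OF lp])
    have b2: "norm (x (r m) - (\<Sum>n<N. proj v (mprod s 0 n *v t' n))) \<le> tail N"
    proof -
      have "norm (x (r m) - (\<Sum>n<N. proj v (mprod s 0 n *v snd (PP (r m)) n))) \<le> tail N"
        using PP[of "r m"] tail_bound[of "snd (PP (r m))" N] pathK[of a "fst (PP (r m))" "snd (PP (r m))"] by simp
      then show ?thesis using same by simp
    qed
    have "norm (y - x (r m)) \<le> norm (y - (\<Sum>n<N. proj v (mprod s 0 n *v t' n))) + norm (x (r m) - (\<Sum>n<N. proj v (mprod s 0 n *v t' n)))"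
      using norm_triangle_ineq4[of "y - (\<Sum>n<N. proj v (mprod s 0 n *v t' n))" "x (r m) - (\<Sum>n<N. proj v (mprod s 0 n *v t' n))"] by simp
    then have "dist y (x (r m)) \<le> 2 * tail N" using b1 b2 by (simp add: dist_norm)
    moreover have "dist (x (r m)) l < e / 3" using M0 by (simp add: m_def)
    ultimately show ?thesis using N dist_triangle[of y l "x (r m)"] by linarith
  qed
  have "y = l"
  proof (rule ccontr)
    assume "y \<noteq> l"
    then have "dist y l > 0" by simp
    then show False using ly[of "dist y l"] by simp
  qed
  then show "l \<in> path_set s v a" using lp unfolding path_set_def y_def by auto
qed

lemma path_compact: "compact (path_set s v a)"
proof -
  have "path_set s v a \<subseteq> cball 0 (tail 0)" using path_norm by auto
  then have "bounded (path_set s v a)" using bounded_cball bounded_subset by blast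
  then show ?thesis using path_closed compact_eq_bounded_closed by blast
qed

end


locale main = fp s u + ser s S v
  for s :: "nat \<Rightarrow> ('a::finite \<Rightarrow> 'a list)" and u S v
begin

lemma W_sub: "proj v ` Wset (u 0) a \<subseteq> path_set s v a"
proof
  fix x assume "x \<in> proj v ` Wset (u 0) a"
  then obtain n where n: "u 0 n = a" "x = proj v (ab (prefix_inf (u 0) n))" by (auto simp: Wset_def)
  obtain st t N1 where d: "st 0 = u 0 n" "\<forall>k. transition (st (Suc k)) (t k) (s (0 + k)) (st k)"
     "\<forall>k\<ge>N1. t k = 0" "ab (prefix_inf (u 0) n) = (\<Sum>k<N1. mprod s 0 k *v t k)"
    using decomp[of 0 n] by blast
  have lp: "left_path s a st t" using d(1,2) n(1) by (simp add: left_path_def)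
  have "x = (\<Sum>k<N1. proj v (mprod s 0 k *v t k))"
    using n(2) d(4) linear_sum[OF linear_proj, of v "\<lambda>k. mprod s 0 k *v t k" "{..<N1}"] by simp
  also have "\<dots> = (\<Sum>k. proj v (mprod s 0 k *v t k))"
    by (rule suminf_finite[symmetric]) (use d(3) linear_0[OF linear_proj] in auto)
  finally show "x \<in> path_set s v a" using lp unfolding path_set_def by auto
qed

lemma path_sub: "path_set s v a \<subseteq> closure (proj v ` Wset (u 0) a)"
proof
  fix y assume "y \<in> path_set s v a"
  then obtain st t where lp: "left_path s a st t" and y: "y = (\<Sum>n. proj v (mprod s 0 n *v t n))"
    unfolding path_set_def by auto
  show "y \<in> closure (proj v ` Wset (u 0) a)"
    unfolding closure_approachable
  proof (intro allI impI)
    fix e :: real assume epos: "e > 0"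
    obtain N where N: "tail N < e / 2" using tail_small[of "e/2"] epos by auto
    obtain i where i: "u N i = st N" using occ by blast
    obtain i0 where i0: "u 0 i0 = a" "ab (prefix_inf (u 0) i0)
           = (\<Sum>k<N. mprod s 0 k *v t k) + mprod s 0 N *v ab (prefix_inf (u N) i)"
      using lift_path[OF lp i] by blast
    obtain st2 t2 N1 where d: "\<forall>k. transition (st2 (Suc k)) (t2 k) (s (N + k)) (st2 k)"
       "ab (prefix_inf (u N) i) = (\<Sum>k<N1. mprod s N k *v t2 k)"
      using decomp[of N i] by blast
    have t2K: "norm1 (t2 k) \<le> K" for k using d(1) transK by blast
    have "mprod s 0 N *v ab (prefix_inf (u N) i) = (\<Sum>k<N1. mprod s 0 N *v (mprod s N k *v t2 k))"
      using d(2) linear_sum[OF matrix_vector_mul_linear, of "mprod s 0 N" "\<lambda>k. mprod s N k *v t2 k" "{..<N1}"]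
      by simp
    also have "\<dots> = (\<Sum>k<N1. mprod s 0 (N + k) *v t2 k)"
      by (simp add: matrix_vector_mul_assoc mprod_add)
    finally have e2: "mprod s 0 N *v ab (prefix_inf (u N) i) = (\<Sum>k<N1. mprod s 0 (N + k) *v t2 k)" .
    define A where "A = (\<Sum>k<N. proj v (mprod s 0 k *v t k))"
    define B where "B = (\<Sum>k<N1. proj v (mprod s 0 (N + k) *v t2 k))"
    define x where "x = proj v (ab (prefix_inf (u 0) i0))"
    have xAB: "x = A + B" unfolding x_def A_def B_def i0(2) e2
      by (simp add: linear_add[OF linear_proj] linear_sum[OF linear_proj])
    have xW: "x \<in> proj v ` Wset (u 0) a" using i0(1) unfolding x_def Wset_def by auto
    have bA: "norm (y - A) \<le> tail N" unfolding y A_def by (rule tail_bound) (rule pathK[OF lp])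
    have bB: "norm B \<le> tail N" unfolding B_def by (rule tail_finite) (rule t2K)
    have "dist x y = norm ((A - y) + B)" using xAB by (simp add: dist_norm algebra_simps)
    also have "\<dots> \<le> norm (A - y) + norm B" by (rule norm_triangle_ineq)
    also have "\<dots> \<le> tail N + tail N" using bA bB by (simp add: norm_minus_commute)
    finally have "dist x y < e" using N by linarith
    then show "\<exists>x\<in>proj v ` Wset (u 0) a. dist x y < e" using xW by blast
  qed
qed

lemma R_eq: "Rset v (u 0) a = path_set s v a"
proof
  show "Rset v (u 0) a \<subseteq> path_set s v a"
    unfolding Rset_def by (rule closure_minimal[OF W_sub path_closed])
  show "path_set s v a \<subseteq> Rset v (u 0) a" unfolding Rset_def by (rule path_sub)
qed

end

theorem proposition3p29:
  fixes S :: "('a::finite \<Rightarrow> 'a list) set"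
    and s :: "nat \<Rightarrow> ('a \<Rightarrow> 'a list)"
    and v :: "real^'a"
  assumes "CARD('a) \<ge> 2"
    and "finite S"
    and "\<forall>\<sigma>\<in>S. unimodular_subst \<sigma>"
    and "\<forall>k. s k \<in> S"
    and "\<forall>n. \<exists>k\<ge>n. \<forall>i j. Mint s n k $ i $ j > 0"
    and "\<forall>i. v $ i \<ge> 0" and "v \<noteq> 0"
    and "summable (\<lambda>n. l1_opnorm (\<lambda>z. proj v (Mint s 0 n *v z)))"
  shows "(\<forall>a u. fixed_point s u \<longrightarrow> Rset v (u 0) a = path_set s v a)
       \<and> (\<forall>u u'. fixed_point s u \<longrightarrow> fixed_point s u' \<longrightarrow> rauzy v (u 0) = rauzy v (u' 0))
       \<and> (\<forall>u. fixed_point s u \<longrightarrow> compact (rauzy v (u 0)))"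
proof -
  have ne: "\<forall>a. s k a \<noteq> []" for k using assms(3,4) by (simp add: unimodular_subst_def)
  have M: "main s u S v" if "fixed_point s u" for u
    using assms ne that by unfold_locales auto
  have R: "Rset v (u 0) a = path_set s v a" if "fixed_point s u" for u a
    using main.R_eq[OF M[OF that]] .
  have ra: "rauzy v (u 0) = (\<Union>a. path_set s v a)" if "fixed_point s u" for u
    using R[OF that] by (simp add: rauzy_def)
  have cp: "compact (path_set s v a)" for a
  proof -
    interpret ser s S v using assms by unfold_locales auto
    show ?thesis by (rule path_compact)
  qed
  have "compact (\<Union>a. path_set s v a)" by (rule compact_UN) (simp_all add: cp)
  then show ?thesis using R ra by simp
qed

end
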